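(* For every integer $\ell\ge1$, let $\widetilde{\mathbb{G}}_\ell$ be a truncated $2^\ell$-triangle in $\mathbb{G}$ and $E_0(-\Delta^{\widetilde{\mathbb{G}}_\ell})$ the smallest eigenvalue of the Laplacian with simple boundary condition on $\ell^2(\widetilde{\mathbb{G}}_\ell)$. Then $$\frac{10}{5^{\ell}}\le E_0(-\Delta^{\widetilde{\mathbb{G}}_\ell})\le\frac{40}{5^{\ell}}.$$
   Context: Let $a_1=(0,0)$, $a_2=(1,0)$, $a_3=(1/2,\sqrt3/2)$, $T_0$ the unit equilateral triangle with these vertices, $T_{n+1}=T_n\cup(T_n+2^na_2)\cup(T_n+2^na_3)$. $\mathbb{G}_n$ is the set of vertices of unit triangles in $T_n$, with $x\sim y$ iff $x\ne y$ lie on a common unit triangle; the Sierpinski lattice is $\mathbb{G}=\bigcup_n(\mathbb{G}_n\cup\mathbb{G}_n')$ ($\mathbb{G}_n'$ the mirror image in the $y$-axis), in which every vertex has degree $\deg(x)=4$. A $2^\ell$-triangle is $\mathbb{G}_\ell$ or any translate of it (or of its mirror image) occurring in the natural decomposition of $\mathbb{G}$ into copies of $\mathbb{G}_\ell$; a truncated $2^\ell$-triangle is a $2^\ell$-triangle with its three corner (extreme) vertices removed. For finite $A\subseteq\mathbb{G}$, the simple-boundary Laplacian is $-\Delta^{A}f(x)=\deg(x)f(x)-\sum_{y\in A,y\sim x}f(y)$, $f\in\ell^2(A)$. *)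

theory Defs
  imports "HOL-Analysis.Analysis"
begin

type_synonym pt = "real \<times> real"

definition sa2 :: pt where "sa2 = (1, 0)"
definition sa3 :: pt where "sa3 = (1/2, sqrt 3 / 2)"

text \<open>Lower-left corners of the unit triangles of T_n:
  B_0 = {0}, B_(n+1) = B_n, B_n + 2^n a2, B_n + 2^n a3.\<close>
fun sbase :: "nat \<Rightarrow> pt set" where
  "sbase 0 = {0}"
| "sbase (Suc n) = sbase n \<union> (\<lambda>p. (2::real)^n *\<^sub>R sa2 + p) ` sbase n
                           \<union> (\<lambda>p. (2::real)^n *\<^sub>R sa3 + p) ` sbase n"

definition utri :: "pt \<Rightarrow> pt set" where
  "utri p = {p, p + sa2, p + sa3}"

definition mirror :: "pt \<Rightarrow> pt" where
  "mirror q = (- fst q, snd q)"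

definition Gn :: "nat \<Rightarrow> pt set" where
  "Gn n = (\<Union>p\<in>sbase n. utri p)"

definition unit_tris :: "pt set set" where
  "unit_tris = {utri p | p n. p \<in> sbase n} \<union> {mirror ` utri p | p n. p \<in> sbase n}"

definition SG :: "pt set" where
  "SG = (\<Union>n. Gn n \<union> mirror ` Gn n)"

definition sadj :: "pt \<Rightarrow> pt \<Rightarrow> bool" where
  "sadj x y \<longleftrightarrow> x \<noteq> y \<and> (\<exists>T\<in>unit_tris. x \<in> T \<and> y \<in> T)"

definition sdeg :: "pt \<Rightarrow> nat" where
  "sdeg x = card {y. sadj x y}"

definition corners :: "nat \<Rightarrow> pt set" where
  "corners l = {0, (2::real)^l *\<^sub>R sa2, (2::real)^l *\<^sub>R sa3}"

definition two_pow_triangle :: "nat \<Rightarrow> pt set \<Rightarrow> bool" where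
  "two_pow_triangle l S \<longleftrightarrow> (\<exists>b n. b \<in> sbase n \<and>
      (S = (\<lambda>x. (2::real)^l *\<^sub>R b + x) ` Gn l \<or>
       S = mirror ` (\<lambda>x. (2::real)^l *\<^sub>R b + x) ` Gn l))"

definition truncated_triangle :: "nat \<Rightarrow> pt set \<Rightarrow> bool" where
  "truncated_triangle l S \<longleftrightarrow> (\<exists>b n. b \<in> sbase n \<and>
      (S = (\<lambda>x. (2::real)^l *\<^sub>R b + x) ` (Gn l - corners l) \<or>
       S = mirror ` (\<lambda>x. (2::real)^l *\<^sub>R b + x) ` (Gn l - corners l)))"

definition neg_laplacian :: "pt set \<Rightarrow> (pt \<Rightarrow> real) \<Rightarrow> pt \<Rightarrow> real" where
  "neg_laplacian A f x = real (sdeg x) * f x - (\<Sum>y\<in>{y\<in>A. sadj x y}. f y)"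

definition is_eigenvalue :: "pt set \<Rightarrow> real \<Rightarrow> bool" where
  "is_eigenvalue A ev \<longleftrightarrow> (\<exists>f. (\<exists>x\<in>A. f x \<noteq> 0) \<and>
      (\<forall>x\<in>A. neg_laplacian A f x = ev * f x))"

definition E0 :: "pt set \<Rightarrow> real" where
  "E0 A = Min {ev. is_eigenvalue A ev}"

end

theory Submission
  imports Defs "Jordan_Normal_Form.Char_Poly"
begin

type_synonym ip = "int \<times> int"

fun Sg :: "nat \<Rightarrow> ip set" where
  "Sg 0 = {(0,0)}"
| "Sg (Suc n) = Sg n \<union> (\<lambda>(a,b). (a + 2^n, b)) ` Sg n \<union> (\<lambda>(a,b). (a, b + 2^n)) ` Sg n"

definition phi :: "ip \<Rightarrow> pt" where
  "phi z = (of_int (fst z) + of_int (snd z)/2, of_int (snd z) * sqrt 3 / 2)"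

definition Ut :: "ip \<Rightarrow> ip set" where "Ut p = {p, (fst p + 1, snd p), (fst p, snd p + 1)}"
definition Vg :: "nat \<Rightarrow> ip set" where "Vg l = (\<Union>p\<in>Sg l. Ut p)"
definition Cg :: "nat \<Rightarrow> ip set" where "Cg l = {(0,0), (2^l, 0), (0, 2^l)}"
definition Dg :: "nat \<Rightarrow> ip set" where "Dg l = Vg l - Cg l"
definition tr :: "int \<Rightarrow> ip \<Rightarrow> ip \<Rightarrow> ip" where "tr k b z = (k * fst b + fst z, k * snd b + snd z)"
definition mir :: "ip \<Rightarrow> ip" where "mir z = (- fst z - snd z, snd z)"

lemma phi_inj: "inj phi"
proof
  fix x y assume "phi x = phi y"
  then have 1: "of_int (fst x) + of_int (snd x)/2 = (of_int (fst y) + of_int (snd y)/2 :: real)"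
    and 2: "of_int (snd x) * sqrt 3 / 2 = (of_int (snd y) * sqrt 3 / 2 :: real)"
    by (auto simp: phi_def)
  from 2 have "snd x = snd y" by simp
  with 1 have "fst x = fst y" by simp
  then show "x = y" using \<open>snd x = snd y\<close> by (simp add: prod_eq_iff)
qed

lemma phi_add: "phi (a, b) + phi (c, d) = phi (a + c, b + d)"
  by (simp add: phi_def algebra_simps add_divide_distrib)

lemma phi_scale: "(of_int k :: real) *\<^sub>R phi (a, b) = phi (k * a, k * b)"
  by (simp add: phi_def algebra_simps)

lemma phi_tr: "(2::real)^l *\<^sub>R phi b + phi z = phi (tr (2^l) b z)"
proof -
  have "(2::real)^l = of_int ((2::int)^l)" by simp
  then show ?thesis
    by (cases b; cases z) (simp only: phi_scale phi_add tr_def fst_conv snd_conv)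
qed

lemma phi_sa2: "phi (1,0) = sa2" by (simp add: phi_def sa2_def)
lemma phi_sa3: "phi (0,1) = sa3" by (simp add: phi_def sa3_def)
lemma phi_0: "phi (0,0) = 0" by (simp add: phi_def zero_prod_def)

lemma mirror_phi: "mirror (phi z) = phi (mir z)"
  by (simp add: mirror_def phi_def mir_def algebra_simps)

lemma sbase_phi: "sbase n = phi ` Sg n"
proof (induction n)
  case 0 then show ?case by (simp add: phi_0)
next
  case (Suc n)
  have a: "(\<lambda>p. (2::real)^n *\<^sub>R sa2 + p) ` phi ` Sg n = phi ` (\<lambda>(a,b). (a + 2^n, b)) ` Sg n"
    unfolding image_image
  proof (rule image_cong[OF refl])
    fix z :: ip assume "z \<in> Sg n"
    show "(2::real)^n *\<^sub>R sa2 + phi z = phi (case z of (a, b) \<Rightarrow> (a + 2 ^ n, b))"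
      using phi_tr[of n "(1,0)" z] by (cases z) (simp add: phi_sa2 tr_def add.commute)
  qed
  have b: "(\<lambda>p. (2::real)^n *\<^sub>R sa3 + p) ` phi ` Sg n = phi ` (\<lambda>(a,b). (a, b + 2^n)) ` Sg n"
    unfolding image_image
  proof (rule image_cong[OF refl])
    fix z :: ip assume "z \<in> Sg n"
    show "(2::real)^n *\<^sub>R sa3 + phi z = phi (case z of (a, b) \<Rightarrow> (a, b + 2 ^ n))"
      using phi_tr[of n "(0,1)" z] by (cases z) (simp add: phi_sa3 tr_def add.commute)
  qed
  show ?case using Suc a b by (simp add: image_Un)
qed

lemma utri_phi: "utri (phi p) = phi ` Ut p"
proof -
  have "phi p + sa2 = phi (fst p + 1, snd p)" using phi_add[of "fst p" "snd p" 1 0]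
    by (simp add: phi_sa2)
  moreover have "phi p + sa3 = phi (fst p, snd p + 1)" using phi_add[of "fst p" "snd p" 0 1]
    by (simp add: phi_sa3)
  ultimately show ?thesis by (simp add: utri_def Ut_def)
qed

lemma Gn_phi: "Gn l = phi ` Vg l"
  by (auto simp: Gn_def Vg_def sbase_phi utri_phi)

lemma corners_phi: "corners l = phi ` Cg l"
proof -
  have "(2::real)^l *\<^sub>R sa2 = phi (2^l, 0)" using phi_scale[of "2^l" 1 0] by (simp add: phi_sa2)
  moreover have "(2::real)^l *\<^sub>R sa3 = phi (0, 2^l)" using phi_scale[of "2^l" 0 1] by (simp add: phi_sa3)
  ultimately show ?thesis by (simp add: corners_def Cg_def phi_0)
qed

definition Eset :: "ip set" where "Eset = {(0,0),(1,0),(0,1)}"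

lemma Sg_bound: "z \<in> Sg l \<Longrightarrow> 0 \<le> fst z \<and> 0 \<le> snd z \<and> fst z + snd z \<le> 2^l - 1"
proof (induction l arbitrary: z)
  case 0 then show ?case by simp
next
  case (Suc l)
  from Suc.prems consider "z \<in> Sg l" | w where "w \<in> Sg l" "z = (fst w + 2^l, snd w)"
    | w where "w \<in> Sg l" "z = (fst w, snd w + 2^l)" by auto
  then show ?case
  proof cases
    case 1 then show ?thesis using Suc.IH[of z] by simp
  next
    case 2 then show ?thesis using Suc.IH[of w] by simp
  next
    case 3 then show ?thesis using Suc.IH[of w] by simp
  qed
qed

lemma finite_Sg: "finite (Sg l)" by (induction l) auto

lemma Sg_mono1: "Sg n \<subseteq> Sg (Suc n)" by auto
lemma Sg_mono: "n \<le> m \<Longrightarrow> Sg n \<subseteq> Sg m"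
  by (induction m rule: dec_induct) (use Sg_mono1 in blast)+

lemma Sg_decomp: "Sg (l + n) = {tr (2^l) c r | c r. c \<in> Sg n \<and> r \<in> Sg l}"
proof (induction n)
  case 0 then show ?case by (auto simp: tr_def)
next
  case (Suc n)
  have e: "Sg (l + Suc n) = Sg (l+n) \<union> (\<lambda>(a,b). (a + 2^(l+n), b)) ` Sg (l+n) \<union> (\<lambda>(a,b). (a, b + 2^(l+n))) ` Sg (l+n)"
    by simp
  show ?case
  proof (rule Set.set_eqI)
    fix z
    show "z \<in> Sg (l + Suc n) \<longleftrightarrow> z \<in> {tr (2^l) c r | c r. c \<in> Sg (Suc n) \<and> r \<in> Sg l}"
    proof
      assume "z \<in> Sg (l + Suc n)"
      then consider "z \<in> Sg (l+n)" | w where "w \<in> Sg (l+n)" "z = (fst w + 2^(l+n), snd w)"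
        | w where "w \<in> Sg (l+n)" "z = (fst w, snd w + 2^(l+n))"
        unfolding e by auto
      then show "z \<in> {tr (2^l) c r | c r. c \<in> Sg (Suc n) \<and> r \<in> Sg l}"
      proof cases
        case 1 then obtain c r where "z = tr (2^l) c r" "c \<in> Sg n" "r \<in> Sg l" using Suc.IH by blast
        moreover have "c \<in> Sg (Suc n)" using \<open>c \<in> Sg n\<close> by simp
        ultimately show ?thesis by blast
      next
        case 2 then obtain c r where cr: "w = tr (2^l) c r" "c \<in> Sg n" "r \<in> Sg l" using Suc.IH by blast
        then have "z = tr (2^l) (fst c + 2^n, snd c) r" using 2 by (auto simp: tr_def power_add algebra_simps)
        moreover have "(fst c + 2^n, snd c) \<in> Sg (Suc n)" using cr by (auto intro: image_eqI[where x=c])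
        ultimately show ?thesis using cr by blast
      next
        case 3 then obtain c r where cr: "w = tr (2^l) c r" "c \<in> Sg n" "r \<in> Sg l" using Suc.IH by blast
        then have "z = tr (2^l) (fst c, snd c + 2^n) r" using 3 by (auto simp: tr_def power_add algebra_simps)
        moreover have "(fst c, snd c + 2^n) \<in> Sg (Suc n)" using cr by (auto intro: image_eqI[where x=c])
        ultimately show ?thesis using cr by blast
      qed
    next
      assume "z \<in> {tr (2^l) c r | c r. c \<in> Sg (Suc n) \<and> r \<in> Sg l}"
      then obtain c r where cr: "z = tr (2^l) c r" "c \<in> Sg (Suc n)" "r \<in> Sg l" by blast
      from cr(2) consider "c \<in> Sg n" | d where "d \<in> Sg n" "c = (fst d + 2^n, snd d)"
        | d where "d \<in> Sg n" "c = (fst d, snd d + 2^n)" by auto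
      then show "z \<in> Sg (l + Suc n)"
      proof cases
        case 1 then have "z \<in> Sg (l+n)" unfolding Suc.IH using cr by blast
        then show ?thesis unfolding e by blast
      next
        case 2 then have w: "tr (2^l) d r \<in> Sg (l+n)" unfolding Suc.IH using cr by blast
        have zz: "z = (fst (tr (2^l) d r) + 2^(l+n), snd (tr (2^l) d r))"
          using cr 2 by (auto simp: tr_def power_add algebra_simps)
        have "z \<in> (\<lambda>(a,b). (a + 2^(l+n), b)) ` Sg (l+n)" by (rule image_eqI[OF _ w]) (simp add: case_prod_beta zz)
        then show ?thesis unfolding e by blast
      next
        case 3 then have w: "tr (2^l) d r \<in> Sg (l+n)" unfolding Suc.IH using cr by blast
        have zz: "z = (fst (tr (2^l) d r), snd (tr (2^l) d r) + 2^(l+n))"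
          using cr 3 by (auto simp: tr_def power_add algebra_simps)
        have "z \<in> (\<lambda>(a,b). (a, b + 2^(l+n))) ` Sg (l+n)" by (rule image_eqI[OF _ w]) (simp add: case_prod_beta zz)
        then show ?thesis unfolding e by blast
      qed
    qed
  qed
qed

lemma Sg1: "Sg 1 = Eset"
proof -
  have "Sg (Suc 0) = Eset" by (auto simp: Eset_def)
  then show ?thesis by simp
qed

lemma Sg_Suc_char: "z \<in> Sg (Suc n) \<longleftrightarrow> (fst z mod 2, snd z mod 2) \<in> Eset \<and> (fst z div 2, snd z div 2) \<in> Sg n"
proof -
  have "Sg (Suc n) = {tr (2^1) c r | c r. c \<in> Sg n \<and> r \<in> Eset}"
  proof -
    have "Sg (Suc n) = Sg (1 + n)" by simp
    also have "\<dots> = {tr (2^1) c r | c r. c \<in> Sg n \<and> r \<in> Sg 1}" by (rule Sg_decomp)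
    finally show ?thesis unfolding Sg1 by simp
  qed
  then have "z \<in> Sg (Suc n) \<longleftrightarrow> (\<exists>c r. z = tr 2 c r \<and> c \<in> Sg n \<and> r \<in> Eset)" by auto
  also have "\<dots> \<longleftrightarrow> (fst z mod 2, snd z mod 2) \<in> Eset \<and> (fst z div 2, snd z div 2) \<in> Sg n"
  proof
    assume "\<exists>c r. z = tr 2 c r \<and> c \<in> Sg n \<and> r \<in> Eset"
    then obtain c r where "z = tr 2 c r" "c \<in> Sg n" "r \<in> Eset" by blast
    moreover from \<open>r \<in> Eset\<close> have "r = (0,0) \<or> r = (1,0) \<or> r = (0,1)" by (simp add: Eset_def)
    ultimately show "(fst z mod 2, snd z mod 2) \<in> Eset \<and> (fst z div 2, snd z div 2) \<in> Sg n"
      by (elim disjE) (simp_all add: Eset_def tr_def)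
  next
    assume a: "(fst z mod 2, snd z mod 2) \<in> Eset \<and> (fst z div 2, snd z div 2) \<in> Sg n"
    have "z = tr 2 (fst z div 2, snd z div 2) (fst z mod 2, snd z mod 2)" by (simp add: tr_def prod_eq_iff)
    then show "\<exists>c r. z = tr 2 c r \<and> c \<in> Sg n \<and> r \<in> Eset" using a by blast
  qed
  finally show ?thesis .
qed

declare Sg.simps(2)[simp del]

definition Pg :: "nat \<Rightarrow> ip \<Rightarrow> ip set" where
  "Pg l z = {e \<in> Eset. (fst z - fst e, snd z - snd e) \<in> Sg l}"

lemma Pg_expl: "Pg l (a,b) = (if (a,b) \<in> Sg l then {(0,0)} else {}) \<union> (if (a-1,b) \<in> Sg l then {(1,0)} else {})
   \<union> (if (a,b-1) \<in> Sg l then {(0,1)} else {})"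
  by (auto simp: Pg_def Eset_def)

lemma Vg_Pg: "z \<in> Vg l \<longleftrightarrow> Pg l z \<noteq> {}"
proof -
  have "z \<in> Vg l \<longleftrightarrow> (\<exists>p\<in>Sg l. z \<in> Ut p)" by (simp add: Vg_def)
  also have "\<dots> \<longleftrightarrow> (\<exists>e\<in>Eset. (fst z - fst e, snd z - snd e) \<in> Sg l)"
  proof
    assume "\<exists>p\<in>Sg l. z \<in> Ut p"
    then obtain p where p: "p \<in> Sg l" "z \<in> Ut p" by blast
    then have "z = p \<or> z = (fst p + 1, snd p) \<or> z = (fst p, snd p + 1)" by (simp add: Ut_def)
    then show "\<exists>e\<in>Eset. (fst z - fst e, snd z - snd e) \<in> Sg l"
      using p(1) by (auto simp: Eset_def)
  next
    assume "\<exists>e\<in>Eset. (fst z - fst e, snd z - snd e) \<in> Sg l"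
    then obtain e where e: "e \<in> Eset" "(fst z - fst e, snd z - snd e) \<in> Sg l" by blast
    then have "z \<in> Ut (fst z - fst e, snd z - snd e)" by (auto simp: Eset_def Ut_def)
    then show "\<exists>p\<in>Sg l. z \<in> Ut p" using e by blast
  qed
  finally show ?thesis unfolding Pg_def by blast
qed

lemma Vg_bound: "z \<in> Vg l \<Longrightarrow> 0 \<le> fst z \<and> 0 \<le> snd z \<and> fst z + snd z \<le> 2^l"
proof -
  assume "z \<in> Vg l"
  then obtain p where p: "p \<in> Sg l" "z \<in> Ut p" by (auto simp: Vg_def)
  then show ?thesis using Sg_bound[OF p(1)] by (auto simp: Ut_def)
qed

lemma finite_Vg: "finite (Vg l)" by (simp add: Vg_def finite_Sg Ut_def)
lemma finite_Dg: "finite (Dg l)" by (simp add: Dg_def finite_Vg)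

lemma Pg_ee: "Pg (Suc l) (2*y1, 2*y2) = Pg l (y1, y2)"
proof -
  have 1: "(2*y1, 2*y2) \<in> Sg (Suc l) \<longleftrightarrow> (y1,y2) \<in> Sg l" by (simp add: Sg_Suc_char Eset_def)
  have 2: "(2*y1 - 1, 2*y2) \<in> Sg (Suc l) \<longleftrightarrow> (y1 - 1,y2) \<in> Sg l"
  proof -
    have "(2*y1 - 1) mod 2 = 1" "(2*y1 - 1) div 2 = y1 - 1" by presburger+
    then show ?thesis by (simp add: Sg_Suc_char Eset_def)
  qed
  have 3: "(2*y1, 2*y2 - 1) \<in> Sg (Suc l) \<longleftrightarrow> (y1,y2 - 1) \<in> Sg l"
  proof -
    have "(2*y2 - 1) mod 2 = 1" "(2*y2 - 1) div 2 = y2 - 1" by presburger+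
    then show ?thesis by (simp add: Sg_Suc_char Eset_def)
  qed
  show ?thesis unfolding Pg_expl 1 2 3 ..
qed

lemma Pg_oe: "Pg (Suc l) (2*q1+1, 2*q2) = (if (q1,q2) \<in> Sg l then {(0,0),(1,0)} else {})"
proof -
  have 1: "(2*q1+1, 2*q2) \<in> Sg (Suc l) \<longleftrightarrow> (q1,q2) \<in> Sg l"
  proof -
    have "(2*q1 + 1) mod 2 = 1" "(2*q1 + 1) div 2 = q1" by presburger+
    then show ?thesis by (simp add: Sg_Suc_char Eset_def)
  qed
  have 2: "(2*q1+1 - 1, 2*q2) \<in> Sg (Suc l) \<longleftrightarrow> (q1,q2) \<in> Sg l" by (simp add: Sg_Suc_char Eset_def)
  have 3: "(2*q1+1, 2*q2 - 1) \<notin> Sg (Suc l)"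
  proof -
    have "(2*q1 + 1) mod 2 = 1" "(2*q2 - 1) mod 2 = 1" by presburger+
    then show ?thesis by (simp add: Sg_Suc_char Eset_def)
  qed
  show ?thesis unfolding Pg_expl 1 2 using 3 by auto
qed

lemma Pg_eo: "Pg (Suc l) (2*q1, 2*q2+1) = (if (q1,q2) \<in> Sg l then {(0,0),(0,1)} else {})"
proof -
  have 1: "(2*q1, 2*q2+1) \<in> Sg (Suc l) \<longleftrightarrow> (q1,q2) \<in> Sg l"
  proof -
    have "(2*q2 + 1) mod 2 = 1" "(2*q2 + 1) div 2 = q2" by presburger+
    then show ?thesis by (simp add: Sg_Suc_char Eset_def)
  qed
  have 3: "(2*q1, 2*q2+1 - 1) \<in> Sg (Suc l) \<longleftrightarrow> (q1,q2) \<in> Sg l" by (simp add: Sg_Suc_char Eset_def)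
  have 2: "(2*q1 - 1, 2*q2 + 1) \<notin> Sg (Suc l)"
  proof -
    have "(2*q1 - 1) mod 2 = 1" "(2*q2 + 1) mod 2 = 1" by presburger+
    then show ?thesis by (simp add: Sg_Suc_char Eset_def)
  qed
  show ?thesis unfolding Pg_expl 1 3 using 2 by auto
qed

lemma Pg_oo: "Pg (Suc l) (2*q1+1, 2*q2+1) = (if (q1,q2) \<in> Sg l then {(1,0),(0,1)} else {})"
proof -
  have 1: "(2*q1+1, 2*q2+1) \<notin> Sg (Suc l)"
  proof -
    have "(2*q1 + 1) mod 2 = 1" "(2*q2 + 1) mod 2 = 1" by presburger+
    then show ?thesis by (simp add: Sg_Suc_char Eset_def)
  qed
  have 2: "(2*q1+1 - 1, 2*q2+1) \<in> Sg (Suc l) \<longleftrightarrow> (q1,q2) \<in> Sg l"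
  proof -
    have "(2*q2 + 1) mod 2 = 1" "(2*q2 + 1) div 2 = q2" by presburger+
    then show ?thesis by (simp add: Sg_Suc_char Eset_def)
  qed
  have 3: "(2*q1+1, 2*q2+1 - 1) \<in> Sg (Suc l) \<longleftrightarrow> (q1,q2) \<in> Sg l"
  proof -
    have "(2*q1 + 1) mod 2 = 1" "(2*q1 + 1) div 2 = q1" by presburger+
    then show ?thesis by (simp add: Sg_Suc_char Eset_def)
  qed
  show ?thesis unfolding Pg_expl 2 3 using 1 by auto
qed

lemma Cg_ee: "(2*y1, 2*y2) \<in> Cg (Suc l) \<longleftrightarrow> (y1, y2) \<in> Cg l"
  by (auto simp: Cg_def)

lemma Cg_odd: "odd (a::int) \<or> odd (b::int) \<Longrightarrow> (a, b) \<notin> Cg (Suc l)"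
  by (auto simp: Cg_def)

lemma parity_cases:
  fixes z :: ip
  obtains (ee) y1 y2 where "z = (2*y1, 2*y2)" | (oe) q1 q2 where "z = (2*q1+1, 2*q2)"
  | (eo) q1 q2 where "z = (2*q1, 2*q2+1)" | (oo) q1 q2 where "z = (2*q1+1, 2*q2+1)"
proof -
  obtain a b where z: "z = (a,b)" by fastforce
  consider "even a" "even b" | "odd a" "even b" | "even a" "odd b" | "odd a" "odd b" by blast
  then show ?thesis
  proof cases
    case 1 then show ?thesis using ee z by (metis evenE)
  next
    case 2 then show ?thesis using oe z by (metis evenE oddE)
  next
    case 3 then show ?thesis using eo z by (metis evenE oddE)
  next
    case 4 then show ?thesis using oo z by (metis oddE)
  qed
qed

lemma Pg_Dg: "z \<in> Dg l \<Longrightarrow> Pg l z = {(0,0),(1,0)} \<or> Pg l z = {(0,0),(0,1)} \<or> Pg l z = {(1,0),(0,1)}"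
proof (induction l arbitrary: z)
  case 0
  have "Vg 0 = Cg 0" by (auto simp: Vg_def Cg_def Ut_def)
  then show ?case using 0 by (simp add: Dg_def)
next
  case (Suc l)
  from Suc.prems have V: "Pg (Suc l) z \<noteq> {}" and C: "z \<notin> Cg (Suc l)" by (auto simp: Dg_def Vg_Pg)
  show ?case
  proof (cases z rule: parity_cases)
    case (ee y1 y2)
    then have "(y1,y2) \<in> Dg l" using V C by (simp add: Dg_def Vg_Pg Pg_ee Cg_ee)
    then show ?thesis using Suc.IH ee by (simp add: Pg_ee)
  next
    case (oe q1 q2) then show ?thesis using V by (simp add: Pg_oe split: if_splits)
  next
    case (eo q1 q2) then show ?thesis using V by (simp add: Pg_eo split: if_splits)
  next
    case (oo q1 q2) then show ?thesis using V by (simp add: Pg_oo split: if_splits)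
  qed
qed

definition Nb :: "nat \<Rightarrow> ip \<Rightarrow> ip set" where
  "Nb l z = (\<Union>e\<in>Pg l z. Ut (fst z - fst e, snd z - snd e)) - {z}"

definition Lg :: "nat \<Rightarrow> (ip \<Rightarrow> real) \<Rightarrow> ip \<Rightarrow> real" where
  "Lg l g z = 4 * g z - (\<Sum>w\<in>Nb l z. g w)"

lemma Nb_Vg: "w \<in> Nb l z \<Longrightarrow> w \<in> Vg l"
  by (auto simp: Nb_def Pg_def Vg_def)

lemma Nb1: "Pg l (a,b) = {(0,0),(1,0)} \<Longrightarrow> Nb l (a,b) = {(a+1,b),(a,b+1),(a-1,b),(a-1,b+1)}"
proof -
  assume P: "Pg l (a,b) = {(0,0),(1,0)}"
  have "Nb l (a,b) = (Ut (a,b) \<union> Ut (a-1,b)) - {(a,b)}" by (simp add: Nb_def P)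
  also have "\<dots> = {(a,b),(a+1,b),(a,b+1),(a-1,b),(a-1,b+1)} - {(a,b)}" by (simp add: Ut_def insert_commute)
  also have "\<dots> = {(a+1,b),(a,b+1),(a-1,b),(a-1,b+1)}" by auto
  finally show ?thesis .
qed
lemma Nb2: "Pg l (a,b) = {(0,0),(0,1)} \<Longrightarrow> Nb l (a,b) = {(a+1,b),(a,b+1),(a,b-1),(a+1,b-1)}"
proof -
  assume P: "Pg l (a,b) = {(0,0),(0,1)}"
  have "Nb l (a,b) = (Ut (a,b) \<union> Ut (a,b-1)) - {(a,b)}" by (simp add: Nb_def P)
  also have "\<dots> = {(a,b),(a+1,b),(a,b+1),(a,b-1),(a+1,b-1)} - {(a,b)}" by (simp add: Ut_def insert_commute)
  also have "\<dots> = {(a+1,b),(a,b+1),(a,b-1),(a+1,b-1)}" by auto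
  finally show ?thesis .
qed
lemma Nb3: "Pg l (a,b) = {(1,0),(0,1)} \<Longrightarrow> Nb l (a,b) = {(a-1,b),(a-1,b+1),(a,b-1),(a+1,b-1)}"
proof -
  assume P: "Pg l (a,b) = {(1,0),(0,1)}"
  have "Nb l (a,b) = (Ut (a-1,b) \<union> Ut (a,b-1)) - {(a,b)}" by (simp add: Nb_def P)
  also have "\<dots> = {(a-1,b),(a,b),(a-1,b+1),(a,b-1),(a+1,b-1)} - {(a,b)}" by (simp add: Ut_def insert_commute)
  also have "\<dots> = {(a-1,b),(a-1,b+1),(a,b-1),(a+1,b-1)}" by auto
  finally show ?thesis .
qed

lemma Lg1: "Pg l (a,b) = {(0,0),(1,0)} \<Longrightarrow> Lg l g (a,b) = 4 * g (a,b) - (g (a+1,b) + g (a,b+1) + g (a-1,b) + g (a-1,b+1))"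
  by (simp add: Lg_def Nb1)
lemma Lg2: "Pg l (a,b) = {(0,0),(0,1)} \<Longrightarrow> Lg l g (a,b) = 4 * g (a,b) - (g (a+1,b) + g (a,b+1) + g (a,b-1) + g (a+1,b-1))"
  by (simp add: Lg_def Nb2)
lemma Lg3: "Pg l (a,b) = {(1,0),(0,1)} \<Longrightarrow> Lg l g (a,b) = 4 * g (a,b) - (g (a-1,b) + g (a-1,b+1) + g (a,b-1) + g (a+1,b-1))"
  by (simp add: Lg_def Nb3)

lemma card_Nb: "z \<in> Dg l \<Longrightarrow> card (Nb l z) = 4"
proof -
  assume z: "z \<in> Dg l"
  obtain a b where ab: "z = (a,b)" by fastforce
  from Pg_Dg[OF z] show ?thesis unfolding ab
    by (elim disjE) (simp_all add: Nb1 Nb2 Nb3)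
qed

definition Hx :: "real \<Rightarrow> (ip \<Rightarrow> real) \<Rightarrow> ip \<Rightarrow> real" where
  "Hx lam g w = (let q1 = fst w div 2; q2 = snd w div 2; A = g (q1,q2); B = g (q1+1,q2); C = g (q1,q2+1);
     D = (2-lam)*(5-lam) in
   if even (fst w) \<and> even (snd w) then A
   else if odd (fst w) \<and> even (snd w) then ((4-lam)*(A+B) + 2*C)/D
   else if even (fst w) \<and> odd (snd w) then ((4-lam)*(A+C) + 2*B)/D
   else ((4-lam)*(B+C) + 2*A)/D)"

lemma Hx_ee: "Hx lam g (2*y1, 2*y2) = g (y1, y2)" by (simp add: Hx_def)
lemma Hx_oe: "Hx lam g (2*q1+1, 2*q2) = ((4-lam)*(g (q1,q2) + g (q1+1,q2)) + 2*g (q1,q2+1))/((2-lam)*(5-lam))"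
proof -
  have "(2*q1+1) div 2 = q1" by presburger
  then show ?thesis by (simp add: Hx_def)
qed
lemma Hx_eo: "Hx lam g (2*q1, 2*q2+1) = ((4-lam)*(g (q1,q2) + g (q1,q2+1)) + 2*g (q1+1,q2))/((2-lam)*(5-lam))"
proof -
  have "(2*q2+1) div 2 = q2" by presburger
  then show ?thesis by (simp add: Hx_def)
qed
lemma Hx_oo: "Hx lam g (2*q1+1, 2*q2+1) = ((4-lam)*(g (q1+1,q2) + g (q1,q2+1)) + 2*g (q1,q2))/((2-lam)*(5-lam))"
proof -
  have "(2*q1+1) div 2 = q1" "(2*q2+1) div 2 = q2" by presburger+
  then show ?thesis by (simp add: Hx_def)
qed

lemma alg_coarse:
  fixes lam a S N :: real
  assumes D: "(2-lam)*(5-lam) \<noteq> 0"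
    and N: "N = 4*(4-lam)*a + (6-lam)*S" and S: "S = (4 - lam*(5-lam))*a"
  shows "4*a - N/((2-lam)*(5-lam)) = lam*a"
proof -
  have "N = (4*(4-lam) + (6-lam)*(4 - lam*(5-lam)))*a" using N S by (simp add: algebra_simps)
  then have "4*a - N/((2-lam)*(5-lam)) = (4*((2-lam)*(5-lam)) - (4*(4-lam) + (6-lam)*(4 - lam*(5-lam))))*a/((2-lam)*(5-lam))"
    using D by (simp add: field_simps)
  also have "4*((2-lam)*(5-lam)) - (4*(4-lam) + (6-lam)*(4 - lam*(5-lam))) = lam*((2-lam)*(5-lam))"
    by (simp add: algebra_simps power2_eq_square)
  finally show ?thesis using D by simp
qed

lemma alg_mid:
  fixes lam a b c :: real
  assumes D: "(2-lam)*(5-lam) \<noteq> 0"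
  shows "4*(((4-lam)*(a+b)+2*c)/((2-lam)*(5-lam))) - (a + b + ((4-lam)*(a+c)+2*b)/((2-lam)*(5-lam))
      + ((4-lam)*(b+c)+2*a)/((2-lam)*(5-lam))) = lam * (((4-lam)*(a+b)+2*c)/((2-lam)*(5-lam)))"
proof -
  define d where "d = (2-lam)*(5-lam)"
  define N1 where "N1 = (4-lam)*(a+b)+2*c"
  define N2 where "N2 = (4-lam)*(a+c)+2*b"
  define N3 where "N3 = (4-lam)*(b+c)+2*a"
  have d0: "d \<noteq> 0" using D by (simp add: d_def)
  have z: "(4-lam)*N1 - d*(a+b) - N2 - N3 = 0" unfolding d_def N1_def N2_def N3_def by (simp add: algebra_simps)
  have "4*(N1/d) - (a + b + N2/d + N3/d) - lam*(N1/d) = ((4-lam)*N1 - d*(a+b) - N2 - N3)/d"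
    using d0 by (simp add: field_simps)
  then have "4*(N1/d) - (a + b + N2/d + N3/d) = lam*(N1/d)" using z by simp
  then show ?thesis unfolding d_def N1_def N2_def N3_def .
qed

lemma Dg_ee: "(2*y1, 2*y2) \<in> Dg (Suc l) \<longleftrightarrow> (y1,y2) \<in> Dg l"
  by (simp add: Dg_def Vg_Pg Pg_ee Cg_ee)
lemma Dg_oe: "(2*q1+1, 2*q2) \<in> Dg (Suc l) \<longleftrightarrow> (q1,q2) \<in> Sg l"
  by (simp add: Dg_def Vg_Pg Pg_oe Cg_odd)
lemma Dg_eo: "(2*q1, 2*q2+1) \<in> Dg (Suc l) \<longleftrightarrow> (q1,q2) \<in> Sg l"
  by (simp add: Dg_def Vg_Pg Pg_eo Cg_odd)
lemma Dg_oo: "(2*q1+1, 2*q2+1) \<in> Dg (Suc l) \<longleftrightarrow> (q1,q2) \<in> Sg l"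
  by (simp add: Dg_def Vg_Pg Pg_oo Cg_odd)

lemma Hx_e2: "Hx lam g (2*q1+2, 2*q2) = g (q1+1, q2)"
  using Hx_ee[of lam g "q1+1" q2] by (simp add: algebra_simps)
lemma Hx_2e: "Hx lam g (2*q1, 2*q2+2) = g (q1, q2+1)"
  using Hx_ee[of lam g q1 "q2+1"] by (simp add: algebra_simps)
lemma Hx_om: "Hx lam g (2*q1 - 1, 2*q2) = ((4-lam)*(g (q1-1,q2) + g (q1,q2)) + 2*g (q1-1,q2+1))/((2-lam)*(5-lam))"
  using Hx_oe[of lam g "q1-1" q2] by (simp add: algebra_simps)
lemma Hx_mo: "Hx lam g (2*q1, 2*q2 - 1) = ((4-lam)*(g (q1,q2-1) + g (q1,q2)) + 2*g (q1+1,q2-1))/((2-lam)*(5-lam))"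
  using Hx_eo[of lam g q1 "q2-1"] by (simp add: algebra_simps)
lemma Hx_om1: "Hx lam g (2*q1 - 1, 2*q2+1) = ((4-lam)*(g (q1,q2) + g (q1-1,q2+1)) + 2*g (q1-1,q2))/((2-lam)*(5-lam))"
  using Hx_oo[of lam g "q1-1" q2] by (simp add: algebra_simps)
lemma Hx_o1m: "Hx lam g (2*q1+1, 2*q2 - 1) = ((4-lam)*(g (q1+1,q2-1) + g (q1,q2)) + 2*g (q1,q2-1))/((2-lam)*(5-lam))"
  using Hx_oo[of lam g q1 "q2-1"] by (simp add: algebra_simps)

lemma alg_coarse2:
  fixes lam a S N1 N2 N3 N4 :: real
  assumes D: "(2-lam)*(5-lam) \<noteq> 0"
    and N: "N1+N2+N3+N4 = 4*(4-lam)*a + (6-lam)*S" and S: "S = (4 - lam*(5-lam))*a"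
  shows "4*a - (N1/((2-lam)*(5-lam)) + N2/((2-lam)*(5-lam)) + N3/((2-lam)*(5-lam)) + N4/((2-lam)*(5-lam))) = lam*a"
proof -
  have "N1/((2-lam)*(5-lam)) + N2/((2-lam)*(5-lam)) + N3/((2-lam)*(5-lam)) + N4/((2-lam)*(5-lam))
     = (N1+N2+N3+N4)/((2-lam)*(5-lam))" by (simp add: add_divide_distrib)
  then show ?thesis using alg_coarse[OF D N S] by simp
qed

lemma decimation:
  fixes g :: "ip \<Rightarrow> real" and lam mu :: real
  assumes g0: "\<And>w. w \<notin> Dg l \<Longrightarrow> g w = 0"
    and eig: "\<And>y. y \<in> Dg l \<Longrightarrow> Lg l g y = mu * g y"
    and mu: "mu = lam*(5-lam)" and D: "(2-lam)*(5-lam) \<noteq> 0"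
    and z: "z \<in> Dg (Suc l)"
  shows "Lg (Suc l) (\<lambda>w. if w \<in> Dg (Suc l) then Hx lam g w else 0) z = lam * Hx lam g z"
proof -
  define h where "h = (\<lambda>w. if w \<in> Dg (Suc l) then Hx lam g w else 0)"
  have hV: "h w = Hx lam g w" if w: "w \<in> Vg (Suc l)" for w
  proof (cases "w \<in> Cg (Suc l)")
    case True
    then have "w = (2*0, 2*0) \<or> w = (2*2^l, 2*0) \<or> w = (2*0, 2*2^l)" by (auto simp: Cg_def)
    moreover have "(0::int,0::int) \<notin> Dg l" "((2::int)^l, 0::int) \<notin> Dg l" "(0::int, (2::int)^l) \<notin> Dg l"
      by (auto simp: Dg_def Cg_def)
    ultimately have "Hx lam g w = 0" using g0 by (elim disjE) (simp_all only: Hx_ee, simp_all)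
    then show ?thesis using True by (simp add: h_def Dg_def)
  next
    case False then show ?thesis using w by (simp add: h_def Dg_def)
  qed
  have zV: "z \<in> Vg (Suc l)" using z by (simp add: Dg_def)
  have LH: "Lg (Suc l) h z = Lg (Suc l) (Hx lam g) z"
    unfolding Lg_def using hV[OF zV] hV Nb_Vg by (auto intro!: sum.cong)
  have "Lg (Suc l) (Hx lam g) z = lam * Hx lam g z"
  proof (cases z rule: parity_cases)
    case (ee y1 y2)
    have y: "(y1,y2) \<in> Dg l" using z ee Dg_ee by simp
    have E: "Lg l g (y1,y2) = mu * g (y1,y2)" using eig[OF y] .
    from Pg_Dg[OF y] consider "Pg l (y1,y2) = {(0,0),(1,0)}" | "Pg l (y1,y2) = {(0,0),(0,1)}"
      | "Pg l (y1,y2) = {(1,0),(0,1)}" by blast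
    then show ?thesis
    proof cases
      case 1
      have P: "Pg (Suc l) (2*y1, 2*y2) = {(0,0),(1,0)}" using 1 by (simp add: Pg_ee)
      have S: "g (y1+1,y2) + g (y1,y2+1) + g (y1-1,y2) + g (y1-1,y2+1) = (4 - lam*(5-lam)) * g (y1,y2)"
        using E Lg1[OF 1, of g] mu by (simp add: algebra_simps)
      show ?thesis unfolding ee Lg1[OF P] Hx_ee
        by (simp only: Hx_oe Hx_eo Hx_om Hx_om1, rule alg_coarse2[OF D _ S]) (simp add: algebra_simps)
    next
      case 2
      have P: "Pg (Suc l) (2*y1, 2*y2) = {(0,0),(0,1)}" using 2 by (simp add: Pg_ee)
      have S: "g (y1+1,y2) + g (y1,y2+1) + g (y1,y2-1) + g (y1+1,y2-1) = (4 - lam*(5-lam)) * g (y1,y2)"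
        using E Lg2[OF 2, of g] mu by (simp add: algebra_simps)
      show ?thesis unfolding ee Lg2[OF P] Hx_ee
        by (simp only: Hx_oe Hx_eo Hx_mo Hx_o1m, rule alg_coarse2[OF D _ S]) (simp add: algebra_simps)
    next
      case 3
      have P: "Pg (Suc l) (2*y1, 2*y2) = {(1,0),(0,1)}" using 3 by (simp add: Pg_ee)
      have S: "g (y1-1,y2) + g (y1-1,y2+1) + g (y1,y2-1) + g (y1+1,y2-1) = (4 - lam*(5-lam)) * g (y1,y2)"
        using E Lg3[OF 3, of g] mu by (simp add: algebra_simps)
      show ?thesis unfolding ee Lg3[OF P] Hx_ee
        by (simp only: Hx_om Hx_om1 Hx_mo Hx_o1m, rule alg_coarse2[OF D _ S]) (simp add: algebra_simps)
    qed
  next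
    case (oe q1 q2)
    have q: "(q1,q2) \<in> Sg l" using z oe Dg_oe by simp
    have P: "Pg (Suc l) (2*q1+1, 2*q2) = {(0,0),(1,0)}" using q by (simp add: Pg_oe)
    have L: "Lg (Suc l) (Hx lam g) (2*q1+1, 2*q2) = 4 * Hx lam g (2*q1+1, 2*q2) -
       (Hx lam g (2*q1+2, 2*q2) + Hx lam g (2*q1+1, 2*q2+1) + Hx lam g (2*q1, 2*q2) + Hx lam g (2*q1, 2*q2+1))"
      using Lg1[OF P, of "Hx lam g"] by (simp add: algebra_simps)
    show ?thesis unfolding oe L Hx_e2 Hx_oo Hx_ee Hx_eo Hx_oe
      using alg_mid[OF D, of "g (q1,q2)" "g (q1+1,q2)" "g (q1,q2+1)"] by (simp add: algebra_simps)
  next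
    case (eo q1 q2)
    have q: "(q1,q2) \<in> Sg l" using z eo Dg_eo by simp
    have P: "Pg (Suc l) (2*q1, 2*q2+1) = {(0,0),(0,1)}" using q by (simp add: Pg_eo)
    have L: "Lg (Suc l) (Hx lam g) (2*q1, 2*q2+1) = 4 * Hx lam g (2*q1, 2*q2+1) -
       (Hx lam g (2*q1+1, 2*q2+1) + Hx lam g (2*q1, 2*q2+2) + Hx lam g (2*q1, 2*q2) + Hx lam g (2*q1+1, 2*q2))"
      using Lg2[OF P, of "Hx lam g"] by (simp add: algebra_simps)
    show ?thesis unfolding eo L Hx_2e Hx_oo Hx_ee Hx_eo Hx_oe
      using alg_mid[OF D, of "g (q1,q2)" "g (q1,q2+1)" "g (q1+1,q2)"] by (simp add: algebra_simps)
  next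
    case (oo q1 q2)
    have q: "(q1,q2) \<in> Sg l" using z oo Dg_oo by simp
    have P: "Pg (Suc l) (2*q1+1, 2*q2+1) = {(1,0),(0,1)}" using q by (simp add: Pg_oo)
    have L: "Lg (Suc l) (Hx lam g) (2*q1+1, 2*q2+1) = 4 * Hx lam g (2*q1+1, 2*q2+1) -
       (Hx lam g (2*q1, 2*q2+1) + Hx lam g (2*q1, 2*q2+2) + Hx lam g (2*q1+1, 2*q2) + Hx lam g (2*q1+2, 2*q2))"
      using Lg3[OF P, of "Hx lam g"] by (simp add: algebra_simps)
    show ?thesis unfolding oo L Hx_2e Hx_e2 Hx_oo Hx_ee Hx_eo Hx_oe
      using alg_mid[OF D, of "g (q1+1,q2)" "g (q1,q2+1)" "g (q1,q2)"] by (simp add: algebra_simps)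
  qed
  then show ?thesis using LH unfolding h_def by simp
qed

fun lamf :: "nat \<Rightarrow> real" where
  "lamf 0 = 0"
| "lamf (Suc 0) = 2"
| "lamf (Suc (Suc l)) = (5 - sqrt (25 - 4 * lamf (Suc l))) / 2"

fun ef :: "nat \<Rightarrow> ip \<Rightarrow> real" where
  "ef 0 = (\<lambda>_. 0)"
| "ef (Suc 0) = (\<lambda>w. if w \<in> Dg 1 then 1 else 0)"
| "ef (Suc (Suc l)) = (\<lambda>w. if w \<in> Dg (Suc (Suc l)) then Hx (lamf (Suc (Suc l))) (ef (Suc l)) w else 0)"

lemma lam_step:
  fixes x t :: real
  assumes x0: "0 < x" and x2: "x \<le> 2" and t: "0 < t"
    and lo: "10 \<le> t * x" and hi: "t * x \<le> 65/4 - 125/(4*t)"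
  defines "y \<equiv> (5 - sqrt (25 - 4 * x)) / 2"
  shows "0 < y \<and> y \<le> 1/2 \<and> y*(5-y) = x \<and> 10 \<le> (5*t) * y \<and> (5*t) * y \<le> 65/4 - 125/(4*(5*t))"
proof -
  define s where "s = sqrt (25 - 4*x)"
  have h0: "0 \<le> 25 - 4*x" using x2 by linarith
  then have s2: "s^2 = 25 - 4*x" unfolding s_def by (rule real_sqrt_pow2)
  have s0: "0 \<le> s" unfolding s_def using h0 by (rule real_sqrt_ge_zero)
  have s5: "s < 5"
  proof (rule ccontr)
    assume "\<not> s < 5"
    then have "(5::real)^2 \<le> s^2" by (intro power_mono) auto
    then show False using s2 x0 by simp
  qed
  have s4: "4 \<le> s"
  proof (rule ccontr)
    assume "\<not> 4 \<le> s"
    then have "s^2 < (4::real)^2" using s0 by (intro power_strict_mono) auto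
    then show False using s2 x2 by simp
  qed
  have yd: "y = (5 - s)/2" by (simp add: y_def s_def)
  have y0: "0 < y" using s5 yd by simp
  have y1: "y \<le> 1/2" using s4 yd by simp
  have "s = 5 - 2*y" using yd by simp
  then have e: "(5 - 2*y)^2 = 25 - 4*x" using s2 by simp
  have "(5 - 2*y)^2 = 25 - 20*y + 4*(y*y)" by (simp add: power2_eq_square algebra_simps)
  then have yx: "y*(5-y) = x" using e by (simp add: algebra_simps)
  have "5*y = x + y^2" using yx by (simp add: algebra_simps power2_eq_square)
  then have ty: "(5*t)*y = t*x + t*y^2" by (simp add: algebra_simps)
  have "t*x \<le> t*y*5" using yx t y0 by (simp add: algebra_simps mult_left_mono)
  then have low: "10 \<le> (5*t)*y" using lo by simp
  have "y*y \<le> 1*y" using y1 y0 by (intro mult_right_mono) auto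
  then have yq: "y \<le> x/4" using yx by (simp add: algebra_simps)
  have "t*y \<le> t*x/4" using yq t by (simp add: field_simps)
  also have "\<dots> \<le> 65/16"
  proof -
    have "0 < 125/(4*t)" using t by simp
    then show ?thesis using hi by linarith
  qed
  finally have tyb: "t*y \<le> 65/16" .
  have tyy: "t*y \<ge> 0" using t y0 by simp
  have "(t*y)^2 \<le> (65/16)^2" using tyb tyy by (intro power_mono) auto
  moreover have "(65/16::real)^2 \<le> 25" by (simp add: power2_eq_square)
  ultimately have "(t*y)^2 \<le> 25" by linarith
  then have "t*y^2 \<le> 25/t" using t by (simp add: field_simps power2_eq_square)
  then have "(5*t)*y \<le> t*x + 25/t" using ty by simp
  also have "\<dots> \<le> 65/4 - 125/(4*(5*t))"
  proof -
    have "125/(4*(5*t)) = 125/(4*t) - 25/t" using t by (simp add: field_simps)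
    then show ?thesis using hi by linarith
  qed
  finally show ?thesis using y0 y1 yx low by simp
qed

lemma Sg1': "Sg (Suc 0) = Eset" using Sg1 by simp

lemma Dg1': "Dg (Suc 0) = {(1,0),(0,1),(1,1)}"
proof -
  have "Vg (Suc 0) = {(0,0),(1,0),(0,1),(2,0),(1,1),(0,2)}"
    by (auto simp: Vg_def Sg1' Eset_def Ut_def)
  then show ?thesis by (auto simp: Dg_def Cg_def)
qed
lemma Dg1: "Dg 1 = {(1,0),(0,1),(1,1)}" using Dg1' by simp

lemma Pg1: "Pg (Suc 0) (1,0) = {(0,0),(1,0)}" "Pg (Suc 0) (0,1) = {(0,0),(0,1)}" "Pg (Suc 0) (1,1) = {(1,0),(0,1)}"
  by (auto simp: Pg_def Sg1' Eset_def)

lemma base_eig: "z \<in> Dg (Suc 0) \<Longrightarrow> Lg (Suc 0) (ef (Suc 0)) z = 2 * ef (Suc 0) z"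
proof -
  assume "z \<in> Dg (Suc 0)"
  then have zc: "z = (1,0) \<or> z = (0,1) \<or> z = (1,1)" using Dg1' by blast
  define F :: "ip \<Rightarrow> real" where "F = (\<lambda>w. if w \<in> {(1,0),(0,1),(1,1)} then 1 else 0)"
  have E: "ef (Suc 0) = F" unfolding F_def using Dg1 by simp
  have "Lg (Suc 0) F (1,0) = 2 * F (1,0)" unfolding Lg1[OF Pg1(1)] by (simp add: F_def)
  moreover have "Lg (Suc 0) F (0,1) = 2 * F (0,1)" unfolding Lg2[OF Pg1(2)] by (simp add: F_def)
  moreover have "Lg (Suc 0) F (1,1) = 2 * F (1,1)" unfolding Lg3[OF Pg1(3)] by (simp add: F_def)
  ultimately show ?thesis unfolding E using zc by blast
qed

lemma cell:
  assumes q: "(q1,q2) \<in> Sg (Suc l)"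
  shows "(q1,q2) \<in> Dg (Suc l) \<or> (q1+1,q2) \<in> Dg (Suc l) \<or> (q1,q2+1) \<in> Dg (Suc l)"
proof -
  have V: "(q1,q2) \<in> Vg (Suc l)" "(q1+1,q2) \<in> Vg (Suc l)" "(q1,q2+1) \<in> Vg (Suc l)"
    unfolding Vg_def by (rule UN_I[OF q], simp add: Ut_def)+
  have "(1::int) \<le> 2^l" by (rule one_le_power) simp
  then have "2 * (2::int)^l \<ge> 2" by simp
  then have "\<not> ((q1,q2) \<in> Cg (Suc l) \<and> (q1+1,q2) \<in> Cg (Suc l))"
    unfolding Cg_def by (auto; linarith)
  then show ?thesis using V by (auto simp: Dg_def)
qed

lemma pos_mid:
  fixes lam A B C :: real
  assumes "0 \<le> A" "0 \<le> B" "0 \<le> C" "0 < A \<or> 0 < B \<or> 0 < C" "lam < 2"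
  shows "0 < ((4-lam)*(A+B) + 2*C)/((2-lam)*(5-lam))"
proof -
  have "0 < (4-lam)*(A+B) + 2*C"
  proof -
    have l4: "0 < 4 - lam" using assms by simp
    have a: "0 \<le> (4-lam)*A" "0 \<le> (4-lam)*B" using assms l4 by simp_all
    have b: "0 < A \<longrightarrow> 0 < (4-lam)*A" "0 < B \<longrightarrow> 0 < (4-lam)*B" using l4 by simp_all
    have "0 < (4-lam)*A + (4-lam)*B + 2*C" using a b assms by linarith
    then show ?thesis by (simp add: distrib_left)
  qed
  moreover have "0 < (2-lam)*(5-lam)" using assms by simp
  ultimately show ?thesis by simp
qed

lemma ef_props:
  "(\<forall>w. w \<notin> Dg (Suc k) \<longrightarrow> ef (Suc k) w = 0) \<and> (\<forall>w\<in>Dg (Suc k). 0 < ef (Suc k) w)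
   \<and> (\<forall>z\<in>Dg (Suc k). Lg (Suc k) (ef (Suc k)) z = lamf (Suc k) * ef (Suc k) z)
   \<and> 0 < lamf (Suc k) \<and> lamf (Suc k) \<le> 2 \<and> 10 \<le> 5^(Suc k) * lamf (Suc k)
   \<and> 5^(Suc k) * lamf (Suc k) \<le> 65/4 - 125/(4*5^(Suc k))"
proof (induction k)
  case 0
  show ?case using base_eig by simp
next
  case (Suc k)
  define x where "x = lamf (Suc k)"
  define y where "y = lamf (Suc (Suc k))"
  define g where "g = ef (Suc k)"
  have yd: "y = (5 - sqrt (25 - 4 * x)) / 2" by (simp add: x_def y_def)
  have t: "(0::real) < 5^(Suc k)" by simp
  from Suc.IH have g0: "\<And>w. w \<notin> Dg (Suc k) \<Longrightarrow> g w = 0" and gp: "\<And>w. w \<in> Dg (Suc k) \<Longrightarrow> 0 < g w"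
    and ge: "\<And>z. z \<in> Dg (Suc k) \<Longrightarrow> Lg (Suc k) g z = x * g z"
    and x0: "0 < x" and x2: "x \<le> 2" and lo: "10 \<le> 5^(Suc k) * x"
    and hi: "5^(Suc k) * x \<le> 65/4 - 125/(4*5^(Suc k))"
    unfolding g_def x_def by auto
  have gnn: "0 \<le> g w" for w using g0[of w] gp[of w] by (cases "w \<in> Dg (Suc k)") auto
  from lam_step[OF x0 x2 t lo hi] have st: "0 < y" "y \<le> 1/2" "y*(5-y) = x"
    "10 \<le> (5*5^(Suc k)) * y" "(5*5^(Suc k)) * y \<le> 65/4 - 125/(4*(5*5^(Suc k)))"
    unfolding yd by auto
  have D: "(2-y)*(5-y) \<noteq> 0" using st by simp
  have efd: "ef (Suc (Suc k)) = (\<lambda>w. if w \<in> Dg (Suc (Suc k)) then Hx y g w else 0)"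
    unfolding y_def g_def by simp
  have eig: "\<forall>z\<in>Dg (Suc (Suc k)). Lg (Suc (Suc k)) (ef (Suc (Suc k))) z = y * ef (Suc (Suc k)) z"
  proof
    fix z assume z: "z \<in> Dg (Suc (Suc k))"
    have "Lg (Suc (Suc k)) (ef (Suc (Suc k))) z = y * Hx y g z"
      unfolding efd by (rule decimation[OF g0 ge st(3)[symmetric] D z])
    then show "Lg (Suc (Suc k)) (ef (Suc (Suc k))) z = y * ef (Suc (Suc k)) z" using z efd by simp
  qed
  have pos: "\<forall>w\<in>Dg (Suc (Suc k)). 0 < ef (Suc (Suc k)) w"
  proof
    fix w assume w: "w \<in> Dg (Suc (Suc k))"
    have y2: "y < 2" using st by simp
    have "0 < Hx y g w"
    proof (cases w rule: parity_cases)
      case (ee y1 y2)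
      then show ?thesis using w gp Dg_ee by (simp add: Hx_ee)
    next
      case (oe q1 q2)
      then have q: "(q1,q2) \<in> Sg (Suc k)" using w Dg_oe by simp
      show ?thesis unfolding oe Hx_oe
        by (rule pos_mid[OF gnn gnn gnn _ y2]) (use cell[OF q] gp in blast)
    next
      case (eo q1 q2)
      then have q: "(q1,q2) \<in> Sg (Suc k)" using w Dg_eo by simp
      show ?thesis unfolding eo Hx_eo
        by (rule pos_mid[OF gnn gnn gnn _ y2]) (use cell[OF q] gp in blast)
    next
      case (oo q1 q2)
      then have q: "(q1,q2) \<in> Sg (Suc k)" using w Dg_oo by simp
      show ?thesis unfolding oo Hx_oo
        by (rule pos_mid[OF gnn gnn gnn _ y2]) (use cell[OF q] gp in blast)
    qed
    then show "0 < ef (Suc (Suc k)) w" using w efd by simp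
  qed
  have z0: "\<forall>w. w \<notin> Dg (Suc (Suc k)) \<longrightarrow> ef (Suc (Suc k)) w = 0" using efd by simp
  have p5: "(5::real)^(Suc (Suc k)) = 5*5^(Suc k)" by simp
  have y2': "y \<le> 2" using st by simp
  show ?case unfolding y_def[symmetric] p5 using eig pos z0 st(1,4,5) y2' by (simp only: simp_thms)
qed

lemma corner_lemma:
  fixes N z1 z2 u1 u2 d1 d2 :: int
  assumes N: "0 < N" and b: "0 \<le> z1" "0 \<le> z2" "z1 + z2 \<le> N" "0 \<le> u1" "0 \<le> u2" "u1 + u2 \<le> N"
    and e1: "z1 - u1 = N*d1" and e2: "z2 - u2 = N*d2"
    and nc: "(z1,z2) \<notin> {(0,0),(N,0),(0,N)}"
  shows "d1 = 0 \<and> d2 = 0"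
proof -
  have ge: "N \<le> N*d" if "1 \<le> d" for d :: int using mult_left_mono[OF that, of N] N by simp
  have le: "N*d \<le> -N" if "d \<le> -1" for d :: int using mult_left_mono[OF that, of N] N by simp
  consider "1 \<le> d1" | "d1 \<le> -1" | "d1 = 0" by linarith
  then show ?thesis
  proof cases
    case 1
    then have "z1 = N" "z2 = 0" using ge[OF 1] e1 b by linarith+
    then show ?thesis using nc by simp
  next
    case 2
    then have h: "z1 = 0" "u2 = 0" using le[OF 2] e1 b by linarith+
    consider "1 \<le> d2" | "d2 \<le> -1" | "d2 = 0" by linarith
    then show ?thesis
    proof cases
      case 1 then have "z2 = N" using ge[OF 1] e2 b h by linarith
      then show ?thesis using nc h by simp
    next
      case 2 then have False using le[OF 2] e2 b h N by linarith
      then show ?thesis ..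
    next
      case 3 then have "z2 = 0" using e2 h by simp
      then show ?thesis using nc h by simp
    qed
  next
    case 3
    consider "1 \<le> d2" | "d2 \<le> -1" | "d2 = 0" by linarith
    then show ?thesis
    proof cases
      case 1 then have "z2 = N" "z1 = 0" using ge[OF 1] e2 b by linarith+
      then show ?thesis using nc by simp
    next
      case 2
      have "z1 = u1" using e1 3 by simp
      then have "z2 = 0" "z1 = 0" using le[OF 2] e2 b by linarith+
      then show ?thesis using nc by simp
    next
      case 4: 3 then show ?thesis using \<open>d1 = 0\<close> by simp
    qed
  qed
qed

lemma Ut_mem: "w \<in> Ut p \<longleftrightarrow> (\<exists>e\<in>Eset. w = (fst p + fst e, snd p + snd e))"
  unfolding Ut_def Eset_def by (cases p) auto

lemma Ut_tr: "Ut (tr k b w) = tr k b ` Ut w"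
  by (simp add: Ut_def tr_def algebra_simps)

lemma tr_inj: "inj (tr k b)"
  by (rule injI) (simp add: tr_def prod_eq_iff)

lemma tr_Sg: "b \<in> Sg n \<Longrightarrow> r \<in> Sg l \<Longrightarrow> tr (2^l) b r \<in> Sg (l + n)"
  unfolding Sg_decomp by blast

context
  fixes l n :: nat and b :: ip
  assumes b: "b \<in> Sg n"
begin

lemma tri_in:
  assumes z: "z \<in> Dg l" and e: "e \<in> Pg l z"
  shows "phi ` Ut (tr (2^l) b (fst z - fst e, snd z - snd e)) \<in> unit_tris"
    and "phi (tr (2^l) b z) \<in> phi ` Ut (tr (2^l) b (fst z - fst e, snd z - snd e))"
proof -
  have r: "(fst z - fst e, snd z - snd e) \<in> Sg l" using e by (simp add: Pg_def)
  have "tr (2^l) b (fst z - fst e, snd z - snd e) \<in> Sg (l+n)" using tr_Sg[OF b r] .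
  then have "phi (tr (2^l) b (fst z - fst e, snd z - snd e)) \<in> sbase (l+n)" by (simp add: sbase_phi)
  then show "phi ` Ut (tr (2^l) b (fst z - fst e, snd z - snd e)) \<in> unit_tris"
    unfolding unit_tris_def utri_phi[symmetric] by blast
  have "e \<in> Eset" using e by (simp add: Pg_def)
  then have "z \<in> Ut (fst z - fst e, snd z - snd e)" by (auto simp: Eset_def Ut_def)
  then show "phi (tr (2^l) b z) \<in> phi ` Ut (tr (2^l) b (fst z - fst e, snd z - snd e))"
    unfolding Ut_tr by blast
qed

lemma tri_only:
  assumes z: "z \<in> Dg l" and T: "T \<in> unit_tris" and x: "phi (tr (2^l) b z) \<in> T"
  shows "\<exists>e\<in>Pg l z. T = phi ` Ut (tr (2^l) b (fst z - fst e, snd z - snd e))"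
proof -
  have zV: "z \<in> Vg l" and zC: "z \<notin> Cg l" using z by (auto simp: Dg_def)
  have zb: "0 \<le> fst z" "0 \<le> snd z" "fst z + snd z \<le> 2^l" using Vg_bound[OF zV] by auto
  have bb: "0 \<le> fst b" "0 \<le> snd b" using Sg_bound[OF b] by auto
  from T consider p m where "p \<in> sbase m" "T = utri p" | p m where "p \<in> sbase m" "T = mirror ` utri p"
    unfolding unit_tris_def by blast
  then show ?thesis
  proof cases
    case 1
    then obtain p' where p': "p' \<in> Sg m" "p = phi p'" by (auto simp: sbase_phi)
    have Tp: "T = phi ` Ut p'" using 1 p' by (simp add: utri_phi)
    have "tr (2^l) b z \<in> Ut p'" using x Tp phi_inj by (auto simp: inj_image_mem_iff)
    then obtain e where e: "e \<in> Eset" "tr (2^l) b z = (fst p' + fst e, snd p' + snd e)"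
      unfolding Ut_mem by blast
    have "p' \<in> Sg (l + m)" using p'(1) Sg_mono[of m "l+m"] by auto
    then obtain c r where cr: "p' = tr (2^l) c r" "c \<in> Sg m" "r \<in> Sg l" unfolding Sg_decomp by blast
    define u where "u = (fst r + fst e, snd r + snd e)"
    have uV: "u \<in> Vg l" unfolding Vg_def u_def using cr(3) e(1)
      by (intro UN_I[OF cr(3)]) (auto simp: Ut_def Eset_def)
    have ub: "0 \<le> fst u" "0 \<le> snd u" "fst u + snd u \<le> 2^l" using Vg_bound[OF uV] by auto
    have eq1: "fst z - fst u = 2^l * (fst c - fst b)" and eq2: "snd z - snd u = 2^l * (snd c - snd b)"
      using e(2) cr(1) by (auto simp: tr_def u_def algebra_simps)
    have nc: "(fst z, snd z) \<notin> {(0,0),(2^l,0),(0,2^l)}" using zC by (simp add: Cg_def)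
    from corner_lemma[OF _ zb(1,2,3) ub eq1 eq2 nc] have "fst c = fst b" "snd c = snd b" by auto
    then have cb: "c = b" by (simp add: prod_eq_iff)
    have zu: "z = u" using eq1 eq2 \<open>fst c = fst b\<close> \<open>snd c = snd b\<close> by (simp add: prod_eq_iff)
    have rz: "r = (fst z - fst e, snd z - snd e)" using zu by (simp add: u_def)
    have "e \<in> Pg l z" using e(1) cr(3) rz by (simp add: Pg_def)
    moreover have "T = phi ` Ut (tr (2^l) b (fst z - fst e, snd z - snd e))" using Tp cr(1) cb rz by simp
    ultimately show ?thesis by blast
  next
    case 2
    then obtain p' where p': "p' \<in> Sg m" "p = phi p'" by (auto simp: sbase_phi)
    have "T = mirror ` phi ` Ut p'" using 2 p' by (simp add: utri_phi)
    then obtain w where w: "w \<in> Ut p'" "phi (tr (2^l) b z) = phi (mir w)" using x mirror_phi by auto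
    then have tw: "tr (2^l) b z = mir w" using phi_inj by (simp add: inj_eq)
    have wb: "0 \<le> fst w" "0 \<le> snd w" using Sg_bound[OF p'(1)] w(1) by (auto simp: Ut_def)
    have p0: "0 \<le> (2::int)^l * fst b" "0 \<le> (2::int)^l * snd b" using bb by simp_all
    have "2^l * fst b + fst z = - fst w - snd w" "2^l * snd b + snd z = snd w"
      using tw by (auto simp: tr_def mir_def)
    then have "fst z = 0" "snd z = 0" using p0 wb zb by linarith+
    then have "z \<in> Cg l" by (simp add: Cg_def prod_eq_iff)
    then show ?thesis using zC by simp
  qed
qed

lemma nbr_set:
  assumes z: "z \<in> Dg l"
  shows "{y. sadj (phi (tr (2^l) b z)) y} = phi ` tr (2^l) b ` Nb l z"
proof (rule Set.set_eqI)
  fix y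
  let ?x = "phi (tr (2^l) b z)"
  have "y \<in> {y. sadj ?x y} \<longleftrightarrow> y \<noteq> ?x \<and> (\<exists>T\<in>unit_tris. ?x \<in> T \<and> y \<in> T)" unfolding mem_Collect_eq sadj_def by (rule conj_cong) auto
  also have "\<dots> \<longleftrightarrow> y \<noteq> ?x \<and> (\<exists>e\<in>Pg l z. y \<in> phi ` Ut (tr (2^l) b (fst z - fst e, snd z - snd e)))"
  proof -
    have "(\<exists>T\<in>unit_tris. ?x \<in> T \<and> y \<in> T) \<longleftrightarrow> (\<exists>e\<in>Pg l z. y \<in> phi ` Ut (tr (2^l) b (fst z - fst e, snd z - snd e)))"
    proof
      assume "\<exists>T\<in>unit_tris. ?x \<in> T \<and> y \<in> T"
      then obtain T where T: "T \<in> unit_tris" "?x \<in> T" "y \<in> T" by blast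
      from tri_only[OF z T(1) T(2)] obtain e where "e \<in> Pg l z" "T = phi ` Ut (tr (2^l) b (fst z - fst e, snd z - snd e))" by blast
      then show "\<exists>e\<in>Pg l z. y \<in> phi ` Ut (tr (2^l) b (fst z - fst e, snd z - snd e))" using T(3) by blast
    next
      assume "\<exists>e\<in>Pg l z. y \<in> phi ` Ut (tr (2^l) b (fst z - fst e, snd z - snd e))"
      then obtain e where e: "e \<in> Pg l z" "y \<in> phi ` Ut (tr (2^l) b (fst z - fst e, snd z - snd e))" by blast
      show "\<exists>T\<in>unit_tris. ?x \<in> T \<and> y \<in> T"
      proof (rule bexI[of _ "phi ` Ut (tr (2^l) b (fst z - fst e, snd z - snd e))"])
        show "?x \<in> phi ` Ut (tr (2^l) b (fst z - fst e, snd z - snd e)) \<and> y \<in> phi ` Ut (tr (2^l) b (fst z - fst e, snd z - snd e))"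
          using tri_in(2)[OF z e(1)] e(2) by (rule conjI)
        show "phi ` Ut (tr (2^l) b (fst z - fst e, snd z - snd e)) \<in> unit_tris" by (rule tri_in(1)[OF z e(1)])
      qed
    qed
    then show ?thesis by (intro conj_cong refl)
  qed
  also have "\<dots> \<longleftrightarrow> y \<in> phi ` tr (2^l) b ` Nb l z"
  proof
    assume a: "y \<noteq> ?x \<and> (\<exists>e\<in>Pg l z. y \<in> phi ` Ut (tr (2^l) b (fst z - fst e, snd z - snd e)))"
    then obtain e where e: "e \<in> Pg l z" "y \<in> phi ` Ut (tr (2^l) b (fst z - fst e, snd z - snd e))" by blast
    from e(2) obtain w where w: "w \<in> Ut (fst z - fst e, snd z - snd e)" "y = phi (tr (2^l) b w)"
      unfolding Ut_tr image_image by blast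
    have "w \<noteq> z" using w(2) a by blast
    then have "w \<in> Nb l z" unfolding Nb_def using e(1) w(1) by blast
    then show "y \<in> phi ` tr (2^l) b ` Nb l z" using w(2) by blast
  next
    assume "y \<in> phi ` tr (2^l) b ` Nb l z"
    then obtain w where w: "w \<in> Nb l z" "y = phi (tr (2^l) b w)" by blast
    then obtain e where e: "e \<in> Pg l z" "w \<in> Ut (fst z - fst e, snd z - snd e)" "w \<noteq> z"
      unfolding Nb_def by blast
    have "tr (2^l) b w \<noteq> tr (2^l) b z" using e(3) tr_inj by (simp add: inj_eq)
    then have "y \<noteq> ?x" using w(2) phi_inj by (simp add: inj_eq)
    moreover have "y \<in> phi ` Ut (tr (2^l) b (fst z - fst e, snd z - snd e))"
      unfolding Ut_tr image_image using w(2) e(2) by blast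
    ultimately show "y \<noteq> ?x \<and> (\<exists>e\<in>Pg l z. y \<in> phi ` Ut (tr (2^l) b (fst z - fst e, snd z - snd e)))"
      using e(1) by blast
  qed
  finally show "y \<in> {y. sadj ?x y} \<longleftrightarrow> y \<in> phi ` tr (2^l) b ` Nb l z" .
qed

end

lemma lap_transfer:
  assumes b: "b \<in> Sg n" and z: "z \<in> Dg l"
  shows "neg_laplacian (phi ` tr (2^l) b ` Dg l) f (phi (tr (2^l) b z))
       = Lg l (\<lambda>w. if w \<in> Dg l then f (phi (tr (2^l) b w)) else 0) z"
proof -
  define F where "F = (\<lambda>w. phi (tr (2^l) b w))"
  have "inj (phi \<circ> tr (2^l) b)" by (rule inj_compose[OF phi_inj tr_inj])
  then have Finj: "inj F" unfolding F_def by (simp add: o_def)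
  have imgF: "phi ` tr (2^l) b ` X = F ` X" for X unfolding F_def by (simp add: image_image)
  have N: "{y. sadj (F z) y} = F ` Nb l z" using nbr_set[OF b z] unfolding F_def imgF .
  have finN: "finite (Nb l z)" using finite_Vg Nb_Vg by (meson finite_subset subsetI)
  have deg: "sdeg (F z) = 4" unfolding sdeg_def N using card_image[OF inj_on_subset[OF Finj]] card_Nb[OF z] by simp
  have S: "{y \<in> F ` Dg l. sadj (F z) y} = F ` (Nb l z \<inter> Dg l)"
  proof -
    have "{y \<in> F ` Dg l. sadj (F z) y} = F ` Dg l \<inter> {y. sadj (F z) y}" by blast
    also have "\<dots> = F ` (Nb l z \<inter> Dg l)" unfolding N using Finj by (simp add: image_Int Int_commute)
    finally show ?thesis .
  qed
  have "(\<Sum>y\<in>{y \<in> F ` Dg l. sadj (F z) y}. f y) = (\<Sum>w\<in>Nb l z \<inter> Dg l. f (F w))"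
    unfolding S using sum.reindex[OF inj_on_subset[OF Finj subset_UNIV, of "Nb l z \<inter> Dg l"], of f]
    by (simp add: o_def)
  also have "\<dots> = (\<Sum>w\<in>Nb l z. if w \<in> Dg l then f (F w) else 0)"
    by (rule sum.inter_restrict[OF finN])
  finally have sumeq: "(\<Sum>y\<in>{y \<in> F ` Dg l. sadj (F z) y}. f y) = (\<Sum>w\<in>Nb l z. if w \<in> Dg l then f (F w) else 0)" .
  have Fz: "\<And>w. F w = phi (tr (2^l) b w)" by (simp add: F_def)
  show ?thesis
    unfolding imgF neg_laplacian_def Lg_def using deg sumeq z unfolding F_def by simp
qed

lemma neg_lap_scale: "neg_laplacian A (\<lambda>x. c * f x) x = c * neg_laplacian A f x"
  by (simp add: neg_laplacian_def sum_distrib_left algebra_simps)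

lemma barta:
  assumes finA: "finite A" and hp: "\<And>x. x \<in> A \<Longrightarrow> 0 < h x"
    and he: "\<And>x. x \<in> A \<Longrightarrow> neg_laplacian A h x = l0 * h x"
    and ev: "is_eigenvalue A ev"
  shows "l0 \<le> ev"
proof -
  obtain f where f1: "\<exists>x\<in>A. f x \<noteq> 0" and fe: "\<And>x. x \<in> A \<Longrightarrow> neg_laplacian A f x = ev * f x"
    using ev unfolding is_eigenvalue_def by blast
  define r where "r x = \<bar>f x\<bar> / h x" for x
  have Ane: "A \<noteq> {}" using f1 by blast
  define M where "M = Max (r ` A)"
  have "M \<in> r ` A" unfolding M_def using finA Ane by (intro Max_in) auto
  then obtain x0 where x0: "x0 \<in> A" "r x0 = M" by blast
  have rle: "r y \<le> r x0" if "y \<in> A" for y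
  proof -
    have "r y \<le> Max (r ` A)" using finA that by (intro Max_ge) auto
    then show ?thesis using x0(2) by (simp add: M_def)
  qed
  obtain x1 where x1: "x1 \<in> A" "f x1 \<noteq> 0" using f1 by blast
  have "0 < r x1" using x1 hp[OF x1(1)] by (simp add: r_def)
  then have rpos: "0 < r x0" using rle[OF x1(1)] by simp
  have fx0: "f x0 \<noteq> 0" using rpos by (auto simp: r_def)
  define s where "s = sgn (f x0)"
  define g where "g x = s * f x" for x
  have s2: "\<bar>s\<bar> = 1" using fx0 by (simp add: s_def abs_sgn)
  have gx0: "g x0 = \<bar>f x0\<bar>" by (simp add: g_def s_def abs_sgn mult.commute)
  have gabs: "g y \<le> \<bar>f y\<bar>" for y
  proof -
    have "\<bar>g y\<bar> = \<bar>f y\<bar>" using s2 by (simp add: g_def abs_mult)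
    then show ?thesis by linarith
  qed
  define \<rho> where "\<rho> = r x0"
  have gy: "g y \<le> \<rho> * h y" if "y \<in> A" for y
  proof -
    have "\<bar>f y\<bar> / h y \<le> \<rho>" using rle[OF that] by (simp add: r_def \<rho>_def)
    then have "\<bar>f y\<bar> \<le> \<rho> * h y" using hp[OF that] by (simp add: field_simps)
    then show ?thesis using gabs[of y] by linarith
  qed
  have gx0': "g x0 = \<rho> * h x0" using gx0 hp[OF x0(1)] by (simp add: \<rho>_def r_def)
  have ge: "neg_laplacian A g x0 = ev * g x0"
    unfolding g_def neg_lap_scale using fe[OF x0(1)] by simp
  let ?N = "{y \<in> A. sadj x0 y}"
  have finN: "finite ?N" using finA by simp
  have "(\<Sum>y\<in>?N. g y) \<le> (\<Sum>y\<in>?N. \<rho> * h y)" by (rule sum_mono) (use gy in auto)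
  then have "neg_laplacian A g x0 \<ge> real (sdeg x0) * g x0 - (\<Sum>y\<in>?N. \<rho> * h y)"
    unfolding neg_laplacian_def by linarith
  also have "real (sdeg x0) * g x0 - (\<Sum>y\<in>?N. \<rho> * h y) = \<rho> * neg_laplacian A h x0"
    unfolding neg_laplacian_def gx0' by (simp add: sum_distrib_left algebra_simps)
  also have "\<dots> = l0 * g x0" using he[OF x0(1)] gx0' by simp
  finally have "l0 * g x0 \<le> ev * g x0" using ge by simp
  moreover have "0 < g x0" using gx0 fx0 by simp
  ultimately show ?thesis by simp
qed

lemma mirror_mirror: "mirror (mirror x) = x" by (simp add: mirror_def)

lemma mirror_tris: "T \<in> unit_tris \<Longrightarrow> mirror ` T \<in> unit_tris"
proof -
  assume "T \<in> unit_tris"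
  then consider "T \<in> {utri p | p n. p \<in> sbase n}" | "T \<in> {mirror ` utri p | p n. p \<in> sbase n}"
    unfolding unit_tris_def by (rule UnE)
  then show ?thesis
  proof cases
    case 1
    then obtain p n where pn: "p \<in> sbase n" "T = utri p" by blast
    have "mirror ` T \<in> {mirror ` utri p | p n. p \<in> sbase n}" using pn by blast
    then show ?thesis unfolding unit_tris_def by (rule UnI2)
  next
    case 2
    then obtain p n where pn: "p \<in> sbase n" "T = mirror ` utri p" by blast
    then have "mirror ` T = utri p" by (simp only: image_image mirror_mirror image_ident)
    then have "mirror ` T \<in> {utri p | p n. p \<in> sbase n}" using pn by blast
    then show ?thesis unfolding unit_tris_def by (rule UnI1)
  qed
qed

lemma sadj_mirror1: "sadj x y \<Longrightarrow> sadj (mirror x) (mirror y)"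
proof -
  assume "sadj x y"
  then have xy: "x \<noteq> y" and ex: "\<exists>T\<in>unit_tris. x \<in> T \<and> y \<in> T" unfolding sadj_def by simp_all
  from ex obtain T where T: "T \<in> unit_tris" "x \<in> T" "y \<in> T" by (elim bexE conjE)
  have a: "mirror ` T \<in> unit_tris" using mirror_tris[OF T(1)] .
  have b1: "mirror x \<in> mirror ` T" using T(2) by (rule imageI)
  have b2: "mirror y \<in> mirror ` T" using T(3) by (rule imageI)
  have c: "mirror x \<noteq> mirror y"
  proof
    assume "mirror x = mirror y"
    then have "mirror (mirror x) = mirror (mirror y)" by simp
    then show False using xy by (simp add: mirror_mirror)
  qed
  have "\<exists>T\<in>unit_tris. mirror x \<in> T \<and> mirror y \<in> T" using a b1 b2 by (intro bexI[of _ "mirror ` T"] conjI)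
  then show ?thesis unfolding sadj_def using c by simp
qed

lemma sadj_mirror: "sadj (mirror x) (mirror y) = sadj x y"
proof
  assume "sadj (mirror x) (mirror y)"
  then have "sadj (mirror (mirror x)) (mirror (mirror y))" by (rule sadj_mirror1)
  then show "sadj x y" by (simp add: mirror_mirror)
qed (rule sadj_mirror1)

lemma mirror_inj: "inj mirror"
proof (rule injI)
  fix x y assume "mirror x = mirror y"
  then have "mirror (mirror x) = mirror (mirror y)" by simp
  then show "x = y" by (simp add: mirror_mirror)
qed

lemma mem_mirror_img: "y \<in> mirror ` S \<longleftrightarrow> mirror y \<in> S"
proof
  assume "y \<in> mirror ` S"
  then obtain w where "w \<in> S" "y = mirror w" by blast
  then show "mirror y \<in> S" by (simp add: mirror_mirror)
next
  assume "mirror y \<in> S"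
  then have "mirror (mirror y) \<in> mirror ` S" by (rule imageI)
  then show "y \<in> mirror ` S" by (simp add: mirror_mirror)
qed

lemma nbr_mirror: "{y. sadj (mirror x) y} = mirror ` {y. sadj x y}"
proof (rule Set.set_eqI)
  fix y
  have "sadj (mirror x) y \<longleftrightarrow> sadj x (mirror y)"
    using sadj_mirror[of x "mirror y"] by (simp add: mirror_mirror)
  then show "y \<in> {y. sadj (mirror x) y} \<longleftrightarrow> y \<in> mirror ` {y. sadj x y}"
    unfolding mem_mirror_img by simp
qed

lemma sdeg_mirror: "sdeg (mirror x) = sdeg x"
  unfolding sdeg_def nbr_mirror by (rule card_image[OF inj_on_subset[OF mirror_inj]]) simp

lemma lap_mirror: "neg_laplacian (mirror ` B) f (mirror x) = neg_laplacian B (\<lambda>y. f (mirror y)) x"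
proof -
  have "{y \<in> mirror ` B. sadj (mirror x) y} = mirror ` {y \<in> B. sadj x y}"
  proof (rule Set.set_eqI)
    fix y
    have "sadj (mirror x) y \<longleftrightarrow> sadj x (mirror y)"
      using sadj_mirror[of x "mirror y"] by (simp add: mirror_mirror)
    then show "y \<in> {y \<in> mirror ` B. sadj (mirror x) y} \<longleftrightarrow> y \<in> mirror ` {y \<in> B. sadj x y}"
      unfolding mem_mirror_img mem_Collect_eq by simp
  qed
  then have "(\<Sum>y\<in>{y \<in> mirror ` B. sadj (mirror x) y}. f y) = (\<Sum>y\<in>{y \<in> B. sadj x y}. f (mirror y))"
    by (simp add: sum.reindex[OF inj_on_subset[OF mirror_inj]])
  then show ?thesis unfolding neg_laplacian_def sdeg_mirror by simp
qed

lemma eig_mirror1: "is_eigenvalue B ev \<Longrightarrow> is_eigenvalue (mirror ` B) ev"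
proof -
  assume "is_eigenvalue B ev"
  then obtain f where f: "(\<exists>x\<in>B. f x \<noteq> 0) \<and> (\<forall>x\<in>B. neg_laplacian B f x = ev * f x)"
    unfolding is_eigenvalue_def by (rule exE)
  define g where "g y = f (mirror y)" for y
  from f obtain x1 where x1: "x1 \<in> B" "f x1 \<noteq> 0" by (elim conjE bexE)
  have g1: "mirror x1 \<in> mirror ` B" "g (mirror x1) \<noteq> 0" using x1 by (simp_all add: g_def mirror_mirror)
  have g2: "\<forall>x\<in>mirror ` B. neg_laplacian (mirror ` B) g x = ev * g x"
  proof
    fix x assume "x \<in> mirror ` B"
    then obtain y where y: "y \<in> B" "x = mirror y" by (rule imageE)
    have "neg_laplacian (mirror ` B) g (mirror y) = neg_laplacian B f y"
      unfolding lap_mirror g_def by (simp add: mirror_mirror)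
    then show "neg_laplacian (mirror ` B) g x = ev * g x" using f y by (simp add: g_def mirror_mirror)
  qed
  have "\<exists>x\<in>mirror ` B. g x \<noteq> 0" using g1 by (rule bexI[rotated])
  then show "is_eigenvalue (mirror ` B) ev" unfolding is_eigenvalue_def using g2 by (intro exI[of _ g] conjI)
qed

lemma eig_mirror: "is_eigenvalue (mirror ` B) ev \<longleftrightarrow> is_eigenvalue B ev"
proof
  assume "is_eigenvalue (mirror ` B) ev"
  then have "is_eigenvalue (mirror ` mirror ` B) ev" by (rule eig_mirror1)
  then show "is_eigenvalue B ev" by (simp only: image_image mirror_mirror image_ident)
qed (rule eig_mirror1)

lemma eig_finite:
  assumes finA: "finite A"
  shows "finite {ev. is_eigenvalue A ev}"
proof -
  define n where "n = card A"
  obtain ix where ix: "bij_betw ix {0..<n} A" using ex_bij_betw_nat_finite[OF finA] unfolding n_def by blast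
  define M :: "real mat" where "M = mat n n (\<lambda>(i,j). (if i = j then real (sdeg (ix i)) else 0) - (if sadj (ix i) (ix j) then 1 else 0))"
  have Mc: "M \<in> carrier_mat n n" by (simp add: M_def)
  have "is_eigenvalue A ev \<Longrightarrow> eigenvalue M ev" for ev
  proof -
    assume "is_eigenvalue A ev"
    then obtain f where f: "(\<exists>x\<in>A. f x \<noteq> 0) \<and> (\<forall>x\<in>A. neg_laplacian A f x = ev * f x)"
      unfolding is_eigenvalue_def by (rule exE)
    define v where "v = vec n (\<lambda>i. f (ix i))"
    have vc: "v \<in> carrier_vec n" by (simp add: v_def)
    from f obtain x1 where x1: "x1 \<in> A" "f x1 \<noteq> 0" by (elim conjE bexE)
    obtain i1 where i1: "i1 < n" "ix i1 = x1" using ix x1(1) unfolding bij_betw_def by auto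
    have vnz: "v \<noteq> 0\<^sub>v n"
    proof
      assume "v = 0\<^sub>v n"
      then have "v $ i1 = 0" using i1 by simp
      then show False using i1 x1 by (simp add: v_def)
    qed
    have Mv: "M *\<^sub>v v = ev \<cdot>\<^sub>v v"
    proof (rule eq_vecI)
      fix i assume i: "i < dim_vec (ev \<cdot>\<^sub>v v)"
      then have i': "i < n" by (simp add: v_def)
      have xi: "ix i \<in> A" using ix i' unfolding bij_betw_def by auto
      have "(M *\<^sub>v v) $ i = (\<Sum>j = 0..<n. M $$ (i,j) * v $ j)"
        using i' Mc vc by (simp add: mult_mat_vec_def scalar_prod_def)
      also have "\<dots> = (\<Sum>j = 0..<n. ((if ix j = ix i then real (sdeg (ix i)) else 0) - (if sadj (ix i) (ix j) then 1 else 0)) * f (ix j))"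
      proof (rule sum.cong[OF refl])
        fix j assume j: "j \<in> {0..<n}"
        have "i = j \<longleftrightarrow> ix j = ix i" using ix i' j unfolding bij_betw_def inj_on_def by auto
        then show "M $$ (i,j) * v $ j = ((if ix j = ix i then real (sdeg (ix i)) else 0) - (if sadj (ix i) (ix j) then 1 else 0)) * f (ix j)"
          using i' j by (simp add: M_def v_def)
      qed
      also have "\<dots> = (\<Sum>y\<in>A. ((if y = ix i then real (sdeg (ix i)) else 0) - (if sadj (ix i) y then 1 else 0)) * f y)"
        by (rule sum.reindex_bij_betw[OF ix])
      also have "\<dots> = (\<Sum>y\<in>A. (if y = ix i then real (sdeg (ix i)) * f y else 0)) - (\<Sum>y\<in>A. if sadj (ix i) y then f y else 0)"
      proof -
        have "(\<Sum>y\<in>A. ((if y = ix i then real (sdeg (ix i)) else 0) - (if sadj (ix i) y then 1 else 0)) * f y)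
          = (\<Sum>y\<in>A. (if y = ix i then real (sdeg (ix i)) * f y else 0) - (if sadj (ix i) y then f y else 0))"
          by (rule sum.cong) (auto simp: algebra_simps)
        also have "\<dots> = (\<Sum>y\<in>A. (if y = ix i then real (sdeg (ix i)) * f y else 0)) - (\<Sum>y\<in>A. if sadj (ix i) y then f y else 0)"
          by (rule sum_subtractf)
        finally show ?thesis .
      qed
      also have "\<dots> = real (sdeg (ix i)) * f (ix i) - (\<Sum>y\<in>{y\<in>A. sadj (ix i) y}. f y)"
        using finA xi by (simp add: sum.delta' sum.inter_filter)
      also have "\<dots> = ev * f (ix i)" using f xi unfolding neg_laplacian_def by simp
      finally show "(M *\<^sub>v v) $ i = (ev \<cdot>\<^sub>v v) $ i" using i' by (simp add: v_def)
    next
      show "dim_vec (M *\<^sub>v v) = dim_vec (ev \<cdot>\<^sub>v v)" using Mc vc by simp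
    qed
    show "eigenvalue M ev" unfolding eigenvalue_def eigenvector_def
      using vc vnz Mv Mc by auto
  qed
  then have sub: "{ev. is_eigenvalue A ev} \<subseteq> {ev. poly (char_poly M) ev = 0}"
    using eigenvalue_root_char_poly[OF Mc] by blast
  have "char_poly M \<noteq> 0" using degree_monic_char_poly[OF Mc] by (metis coeff_0 zero_neq_one)
  then have "finite {ev. poly (char_poly M) ev = 0}" by (rule poly_roots_finite)
  then show ?thesis using sub by (rule finite_subset[rotated])
qed

lemma Dg_nonempty: "(1,0) \<in> Dg (Suc k)"
proof -
  have "(0,0) \<in> Sg (Suc k)" using Sg_mono[of 0 "Suc k"] by auto
  then have "(1,0) \<in> Vg (Suc k)" unfolding Vg_def by (rule UN_I) (simp add: Ut_def)
  moreover have "(1::int,0::int) \<notin> Cg (Suc k)"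
  proof -
    have "(1::int) \<le> 2^k" by (rule one_le_power) simp
    then show ?thesis unfolding Cg_def by (auto; linarith)
  qed
  ultimately show ?thesis by (simp add: Dg_def)
qed

lemma E0_block:
  assumes b: "b \<in> Sg n"
  shows "E0 (phi ` tr (2^Suc k) b ` Dg (Suc k)) = lamf (Suc k)"
proof -
  define l where "l = Suc k"
  define B where "B = phi ` tr (2^l) b ` Dg l"
  define F where "F w = phi (tr (2^l) b w)" for w
  have "inj (phi \<circ> tr (2^l) b)" by (rule inj_compose[OF phi_inj tr_inj])
  then have Finj: "inj F" unfolding F_def[abs_def] by (simp add: o_def)
  have BF: "B = F ` Dg l" unfolding B_def F_def by (simp add: image_image)
  define h where "h x = ef l (inv_into UNIV F x)" for x
  have hF: "h (F w) = ef l w" for w unfolding h_def using Finj by (simp add: inv_into_f_f)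
  from ef_props[of k] have e0: "\<And>w. w \<notin> Dg l \<Longrightarrow> ef l w = 0" and epos: "\<And>w. w \<in> Dg l \<Longrightarrow> 0 < ef l w"
    and eeig: "\<And>z. z \<in> Dg l \<Longrightarrow> Lg l (ef l) z = lamf l * ef l z"
    unfolding l_def by auto
  have finB: "finite B" unfolding BF using finite_Dg by simp
  have hpos: "0 < h x" if "x \<in> B" for x using that epos unfolding BF by (auto simp: hF)
  have heig: "neg_laplacian B h x = lamf l * h x" if "x \<in> B" for x
  proof -
    from that obtain z where z: "z \<in> Dg l" "x = F z" unfolding BF by blast
    have fe: "(\<lambda>w. if w \<in> Dg l then h (phi (tr (2^l) b w)) else 0) = ef l"
      using e0 by (auto simp: hF[unfolded F_def])
    have "neg_laplacian B h x = Lg l (ef l) z"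
      unfolding B_def z(2) F_def lap_transfer[OF b z(1)] fe ..
    then show ?thesis using eeig[OF z(1)] z(2) by (simp add: hF)
  qed
  have ev0: "is_eigenvalue B (lamf l)"
  proof -
    have d1: "(1,0) \<in> Dg l" unfolding l_def by (rule Dg_nonempty)
    have "F (1,0) \<in> B" unfolding BF using d1 by (rule imageI)
    moreover have "h (F (1,0)) \<noteq> 0" using epos[OF d1] by (simp add: hF)
    ultimately have "\<exists>x\<in>B. h x \<noteq> 0" by blast
    then show ?thesis unfolding is_eigenvalue_def using heig by blast
  qed
  have lb: "lamf l \<le> ev" if "is_eigenvalue B ev" for ev
    using barta[OF finB hpos heig that] by simp
  have "Min {ev. is_eigenvalue B ev} = lamf l"
    using eig_finite[OF finB] lb ev0 by (intro Min_eqI) auto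
  then show ?thesis unfolding E0_def B_def l_def .
qed

theorem proposition5p4:
  fixes l :: nat and A :: "pt set"
  assumes "l \<ge> 1" and "truncated_triangle l A"
  shows "10 / 5 ^ l \<le> E0 A \<and> E0 A \<le> 40 / 5 ^ l"
proof -
  obtain k where k: "l = Suc k" using assms(1) by (cases l) auto
  from assms(2) obtain b0 n where b0: "b0 \<in> sbase n" and
    A: "A = (\<lambda>x. (2::real)^l *\<^sub>R b0 + x) ` (Gn l - corners l) \<or>
        A = mirror ` (\<lambda>x. (2::real)^l *\<^sub>R b0 + x) ` (Gn l - corners l)"
    unfolding truncated_triangle_def by blast
  obtain b where b: "b \<in> Sg n" "b0 = phi b" using b0 by (auto simp: sbase_phi)
  define B where "B = phi ` tr (2^l) b ` Dg l"
  have GC: "Gn l - corners l = phi ` Dg l"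
    unfolding Gn_phi corners_phi Dg_def by (rule image_set_diff[OF phi_inj, symmetric])
  have BB: "(\<lambda>x. (2::real)^l *\<^sub>R b0 + x) ` (Gn l - corners l) = B"
    unfolding GC B_def b(2) image_image phi_tr by simp
  have "is_eigenvalue A = is_eigenvalue B"
    using A unfolding BB by (auto simp: eig_mirror)
  then have EA: "E0 A = E0 B" unfolding E0_def by simp
  have EB: "E0 B = lamf l" unfolding B_def k by (rule E0_block[OF b(1)])
  from ef_props[of k] have lo: "10 \<le> 5^l * lamf l" and hi: "5^l * lamf l \<le> 65/4 - 125/(4*5^l)"
    unfolding k by auto
  have p: "(0::real) < 5^l" by simp
  have "5^l * lamf l \<le> 40"
  proof -
    have "0 < 125/(4*(5::real)^l)" by simp
    then show ?thesis using hi by linarith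
  qed
  then have u: "lamf l \<le> 40 / 5^l" using p by (simp add: field_simps)
  have d: "10 / 5^l \<le> lamf l" using lo p by (simp add: field_simps)
  show ?thesis using EA EB u d by simp
qed

end
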